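(* For every nonnegative integer $l$ there exists a connected graph $G$ with $p(G)-k(G)+1=l$.
   Context: All graphs are finite and simple. For an acyclic digraph $D$, the competition graph $C(D)$ is the graph on $V(D)$ in which distinct $u,v$ are adjacent iff they have a common out-neighbor in $D$. The competition number $k(G)$ is the smallest $k\ge 0$ such that $G$ together with $k$ new isolated vertices is the competition graph of some acyclic digraph. The phylogeny graph $P(D)$ of an acyclic digraph $D$ is the graph on $V(D)$ in which distinct vertices $u,v$ are adjacent iff $(u,v)\in A(D)$, or $(v,u)\in A(D)$, or they have a common out-neighbor in $D$. A phylogeny digraph for a graph $G$ is an acyclic digraph $D$ such that $G$ is an induced subgraph of $P(D)$ and $D$ has no arc from a vertex of $V(D)\setminus V(G)$ to a vertex of $V(G)$. The phylogeny number $p(G)$ is the minimum of $|V(D)\setminus V(G)|$ over all phylogeny digraphs $D$ for $G$. *)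

theory Defs
  imports Main
begin

definition simple_graph :: "'a set \<Rightarrow> ('a \<times> 'a) set \<Rightarrow> bool" where
  "simple_graph V E \<longleftrightarrow> finite V \<and> E \<subseteq> V \<times> V \<and> sym E \<and> irrefl E"

definition connected_graph :: "'a set \<Rightarrow> ('a \<times> 'a) set \<Rightarrow> bool" where
  "connected_graph V E \<longleftrightarrow> V \<noteq> {} \<and> (\<forall>u\<in>V. \<forall>v\<in>V. (u, v) \<in> E\<^sup>*)"

definition acyclic_digraph :: "'a set \<Rightarrow> ('a \<times> 'a) set \<Rightarrow> bool" where
  "acyclic_digraph W A \<longleftrightarrow> finite W \<and> A \<subseteq> W \<times> W \<and> acyclic A"

definition competition_edges :: "'a set \<Rightarrow> ('a \<times> 'a) set \<Rightarrow> ('a \<times> 'a) set" where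
  "competition_edges W A =
     {(u, v). u \<in> W \<and> v \<in> W \<and> u \<noteq> v \<and> (\<exists>w. (u, w) \<in> A \<and> (v, w) \<in> A)}"

definition phylogeny_edges :: "'a set \<Rightarrow> ('a \<times> 'a) set \<Rightarrow> ('a \<times> 'a) set" where
  "phylogeny_edges W A =
     {(u, v). u \<in> W \<and> v \<in> W \<and> u \<noteq> v \<and>
        ((u, v) \<in> A \<or> (v, u) \<in> A \<or> (\<exists>w. (u, w) \<in> A \<and> (v, w) \<in> A))}"

definition competition_number :: "'a set \<Rightarrow> ('a \<times> 'a) set \<Rightarrow> nat" where
  "competition_number V E = (LEAST k. \<exists>I A. finite I \<and> card I = k \<and> I \<inter> V = {} \<and>
      acyclic_digraph (V \<union> I) A \<and> competition_edges (V \<union> I) A = E)"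

definition phylogeny_digraph :: "'a set \<Rightarrow> ('a \<times> 'a) set \<Rightarrow> 'a set \<Rightarrow> ('a \<times> 'a) set \<Rightarrow> bool" where
  "phylogeny_digraph V E W A \<longleftrightarrow> acyclic_digraph W A \<and> V \<subseteq> W \<and>
      (\<forall>u\<in>V. \<forall>v\<in>V. (u, v) \<in> E \<longleftrightarrow> (u, v) \<in> phylogeny_edges W A) \<and>
      (\<forall>x\<in>W - V. \<forall>y\<in>V. (x, y) \<notin> A)"

definition phylogeny_number :: "'a set \<Rightarrow> ('a \<times> 'a) set \<Rightarrow> nat" where
  "phylogeny_number V E = (LEAST n. \<exists>W A. phylogeny_digraph V E W A \<and> card (W - V) = n)"

end

theory Submission
  imports Defs
begin

definition Yv :: "nat \<Rightarrow> nat \<Rightarrow> bool" where "Yv b y \<longleftrightarrow> 2 \<le> y \<and> y < 2+b"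
definition Xv :: "nat \<Rightarrow> nat \<Rightarrow> bool" where "Xv b x \<longleftrightarrow> 2+b \<le> x \<and> x < 2+3*b"
definition adjG :: "nat \<Rightarrow> nat \<Rightarrow> nat \<Rightarrow> bool" where
  "adjG b u v \<longleftrightarrow> (u \<le> 1 \<and> Yv b v) \<or> (v \<le> 1 \<and> Yv b u) \<or> (u = 0 \<and> Xv b v) \<or> (v = 0 \<and> Xv b u)
      \<or> (Xv b u \<and> Xv b v \<and> u \<noteq> v)"
definition VG :: "nat \<Rightarrow> nat set" where "VG b = {0..<2+3*b}"
definition EG :: "nat \<Rightarrow> (nat \<times> nat) set" where "EG b = {(u,v). adjG b u v}"

lemma acyclic_rank:
  assumes "\<forall>(u,v)\<in>A. f u < (f v::nat)" shows "acyclic A"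
proof -
  have "(x,y)\<in>A\<^sup>+ \<Longrightarrow> f x < f y" for x y
    by (induction rule: trancl.induct) (use assms in auto)
  thus ?thesis by (auto simp: acyclic_def)
qed

lemma simple_G: "simple_graph (VG b) (EG b)"
  unfolding simple_graph_def VG_def EG_def sym_def irrefl_def adjG_def Xv_def Yv_def
  by auto

lemma nbr: "b \<ge> 1 \<Longrightarrow> v \<in> VG b \<Longrightarrow> \<exists>w. (v,w) \<in> EG b"
  unfolding VG_def EG_def adjG_def Xv_def Yv_def
  apply (cases "v = 0") apply (rule exI[of _ 2]) apply simp
  apply (cases "v = 1") apply (rule exI[of _ 2]) apply simp
  apply (rule exI[of _ 0]) apply auto
  done

lemma conn_G: "b \<ge> 1 \<Longrightarrow> connected_graph (VG b) (EG b)"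
proof -
  assume b: "b \<ge> 1"
  have to0: "(v,0) \<in> (EG b)\<^sup>*" if "v \<in> VG b" for v
  proof -
    have "v = 0 \<or> v = 1 \<or> (v,0) \<in> EG b" using that unfolding VG_def EG_def adjG_def Xv_def Yv_def by auto
    moreover have "(1,2) \<in> EG b" "(2,0) \<in> EG b" using b unfolding EG_def adjG_def Xv_def Yv_def by auto
    ultimately show ?thesis by (meson converse_rtrancl_into_rtrancl r_into_rtrancl rtrancl.rtrancl_refl)
  qed
  have symE: "sym (EG b)" using simple_G unfolding simple_graph_def by auto
  have "(0,v) \<in> (EG b)\<^sup>*" if "v \<in> VG b" for v
    using to0[OF that] symE by (metis rtrancl_converseD sym_conv_converse_eq sym_rtrancl)
  note fr = this
  show ?thesis unfolding connected_graph_def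
  proof (intro conjI ballI)
    show "VG b \<noteq> {}" unfolding VG_def by auto
    fix u v assume "u \<in> VG b" "v \<in> VG b"
    then show "(u,v) \<in> (EG b)\<^sup>*" using to0 fr by (meson rtrancl_trans)
  qed
qed

lemma sink_exists:
  assumes "finite W" "A \<subseteq> W \<times> W" "acyclic A" "v0 \<in> W"
  shows "\<exists>v\<in>W. \<forall>w. (v,w) \<notin> A"
proof -
  have fA: "finite A" using assms(1,2) finite_subset by blast
  have "wf (A\<inverse>)" using finite_acyclic_wf_converse[OF fA assms(3)] .
  then obtain z where "z \<in> W" "\<forall>y. (y,z) \<in> A\<inverse> \<longrightarrow> y \<notin> W"
    using assms(4) unfolding wf_eq_minimal by blast
  then show ?thesis using assms(2) by blast
qed

definition AK :: "nat \<Rightarrow> (nat \<times> nat) set" where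
  "AK b = {(u,w). ((2+b \<le> w \<and> w < 2+2*b) \<and> (u = 0 \<or> u + b = w)) \<or>
                 ((2+2*b \<le> w \<and> w < 2+3*b) \<and> (u = 1 \<or> u + 2*b = w)) \<or>
                 (w = 2+3*b \<and> (u = 0 \<or> Xv b u))}"

lemma AK_acyc: "acyclic_digraph (VG b \<union> {2+3*b}) (AK b)"
  unfolding acyclic_digraph_def
proof (intro conjI)
  show "finite (VG b \<union> {2+3*b})" unfolding VG_def by auto
  show "AK b \<subseteq> (VG b \<union> {2+3*b}) \<times> (VG b \<union> {2+3*b})"
    unfolding AK_def VG_def Xv_def by auto
  show "acyclic (AK b)" by (rule acyclic_rank[where f=id]) (auto simp: AK_def Xv_def)
qed

lemma AK_comp: "competition_edges (VG b \<union> {2+3*b}) (AK b) = EG b"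
proof (rule set_eqI, clarify)
  fix u v
  show "(u,v) \<in> competition_edges (VG b \<union> {2+3*b}) (AK b) \<longleftrightarrow> (u,v) \<in> EG b"
  proof
    assume "(u,v) \<in> competition_edges (VG b \<union> {2+3*b}) (AK b)"
    then obtain w where "u \<in> VG b \<union> {2+3*b}" "v \<in> VG b \<union> {2+3*b}" "u \<noteq> v" "(u,w) \<in> AK b" "(v,w) \<in> AK b"
      unfolding competition_edges_def by auto
    note hh = this
    have uw: "(2+b \<le> w \<and> w < 2+2*b \<and> (u = 0 \<or> u + b = w)) \<or>
          (2+2*b \<le> w \<and> w < 2+3*b \<and> (u = 1 \<or> u + 2*b = w)) \<or> (w = 2+3*b \<and> (u = 0 \<or> Xv b u))"
      using hh(4) unfolding AK_def by auto
    have vw: "(2+b \<le> w \<and> w < 2+2*b \<and> (v = 0 \<or> v + b = w)) \<or>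
          (2+2*b \<le> w \<and> w < 2+3*b \<and> (v = 1 \<or> v + 2*b = w)) \<or> (w = 2+3*b \<and> (v = 0 \<or> Xv b v))"
      using hh(5) unfolding AK_def by auto
    have "adjG b u v"
    proof -
      consider (r1) "2+b \<le> w" "w < 2+2*b" | (r2) "2+2*b \<le> w" "w < 2+3*b" | (r3) "w = 2+3*b"
        using uw by linarith
      then show ?thesis
      proof cases
        case r1
        then have "u = 0 \<or> u + b = w" "v = 0 \<or> v + b = w" using uw vw by linarith+
        then show ?thesis using r1 hh(3) unfolding adjG_def Yv_def by auto
      next
        case r2
        then have "u = 1 \<or> u + 2*b = w" "v = 1 \<or> v + 2*b = w" using uw vw by linarith+
        then show ?thesis using r2 hh(3) unfolding adjG_def Yv_def by auto
      next
        case r3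
        then have "u = 0 \<or> Xv b u" "v = 0 \<or> Xv b v" using uw vw by (auto simp: Xv_def)
        then show ?thesis using hh(3) unfolding adjG_def by auto
      qed
    qed
    then show "(u,v) \<in> EG b" unfolding EG_def by auto
  next
    assume "(u,v) \<in> EG b"
    then have a: "adjG b u v" unfolding EG_def by auto
    have uv: "u \<in> VG b" "v \<in> VG b" "u \<noteq> v" using a unfolding adjG_def VG_def Xv_def Yv_def by auto
    have "\<exists>w. (u,w) \<in> AK b \<and> (v,w) \<in> AK b"
    proof -
      consider "u = 0" "Yv b v" | "u = 1" "Yv b v" | "v = 0" "Yv b u" | "v = 1" "Yv b u"
        | "Xv b v" "u = 0 \<or> Xv b u" | "Xv b u" "v = 0"
        using a unfolding adjG_def by force
      then show ?thesis
      proof cases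
        case 1 then show ?thesis by (intro exI[of _ "v+b"]) (auto simp: AK_def Yv_def)
      next
        case 2 then show ?thesis by (intro exI[of _ "v+2*b"]) (auto simp: AK_def Yv_def)
      next
        case 3 then show ?thesis by (intro exI[of _ "u+b"]) (auto simp: AK_def Yv_def)
      next
        case 4 then show ?thesis by (intro exI[of _ "u+2*b"]) (auto simp: AK_def Yv_def)
      next
        case 5 then show ?thesis by (intro exI[of _ "2+3*b"]) (auto simp: AK_def)
      next
        case 6 then show ?thesis by (intro exI[of _ "2+3*b"]) (auto simp: AK_def)
      qed
    qed
    then show "(u,v) \<in> competition_edges (VG b \<union> {2+3*b}) (AK b)"
      using uv unfolding competition_edges_def by auto
  qed
qed

lemma k_val: "b \<ge> 1 \<Longrightarrow> competition_number (VG b) (EG b) = 1"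
  unfolding competition_number_def
proof (rule Least_equality)
  show "\<exists>I A. finite I \<and> card I = 1 \<and> I \<inter> VG b = {} \<and>
      acyclic_digraph (VG b \<union> I) A \<and> competition_edges (VG b \<union> I) A = EG b"
    using AK_acyc[of b] AK_comp[of b]
    by (intro exI[of _ "{2+3*b}"] exI[of _ "AK b"]) (auto simp: VG_def)
next
  fix k assume b: "b \<ge> 1" and "\<exists>I A. finite I \<and> card I = k \<and> I \<inter> VG b = {} \<and>
      acyclic_digraph (VG b \<union> I) A \<and> competition_edges (VG b \<union> I) A = EG b"
  then obtain I A where h: "finite I" "card I = k" "acyclic_digraph (VG b \<union> I) A"
     "competition_edges (VG b \<union> I) A = EG b" by blast
  show "1 \<le> k"
  proof (rule ccontr)
    assume "\<not> 1 \<le> k"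
    then have "card I = 0" using h by auto
    then have "I = {}" using h(1) by simp
    then have h3: "acyclic_digraph (VG b) A" "competition_edges (VG b) A = EG b" using h by auto
    have "0 \<in> VG b" unfolding VG_def by auto
    then obtain v where v: "v \<in> VG b" "\<forall>w. (v,w) \<notin> A"
      using sink_exists h3(1) unfolding acyclic_digraph_def by metis
    obtain w where "(v,w) \<in> EG b" using nbr[OF b v(1)] by blast
    then show False using h3(2) v(2) unfolding competition_edges_def by auto
  qed
qed

lemma p_lower:
  assumes pd: "phylogeny_digraph V E W A"
    and FE: "F \<subseteq> E" and fF: "finite F"
    and FS: "\<forall>(u,v)\<in>F. u \<in> S \<and> v \<in> S \<and> u \<noteq> v"
    and SV: "S \<subseteq> V" and Sne: "S \<noteq> {}"
    and cl: "\<And>K u v. K \<subseteq> V \<Longrightarrow> (\<forall>x\<in>K. \<forall>y\<in>K. x \<noteq> y \<longrightarrow> (x,y) \<in> E) \<Longrightarrow> (u,v) \<in> F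
               \<Longrightarrow> u \<in> K \<Longrightarrow> v \<in> K \<Longrightarrow> K = {u,v}"
    and inj: "\<And>u v u' v'. (u,v)\<in>F \<Longrightarrow> (u',v')\<in>F \<Longrightarrow> {u,v} = {u',v'} \<Longrightarrow> (u,v) = (u',v')"
  shows "card F + 1 \<le> card S + card (W - V)"
proof -
  from pd have aW: "finite W" "A \<subseteq> W \<times> W" "acyclic A" "V \<subseteq> W"
    and ed: "\<forall>u\<in>V. \<forall>v\<in>V. (u,v)\<in>E \<longleftrightarrow> (u,v) \<in> phylogeny_edges W A"
    unfolding phylogeny_digraph_def acyclic_digraph_def by blast+
  have fA: "finite A" using aW(1,2) finite_subset by blast
  have wfA: "wf A" using finite_acyclic_wf fA aW(3) by blast
  from Sne obtain s0 where "s0 \<in> S" by blast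
  then obtain m where mS: "m \<in> S" and mmin: "\<forall>y. (y,m) \<in> A \<longrightarrow> y \<notin> S"
    using wfA unfolding wf_eq_minimal by blast
  define K where "K w = {x\<in>V. (x,w)\<in>A \<or> x = w}" for w
  have Kcl: "\<forall>x\<in>K w. \<forall>y\<in>K w. x \<noteq> y \<longrightarrow> (x,y)\<in>E" for w
  proof (intro ballI impI)
    fix x y assume xy: "x\<in>K w" "y\<in>K w" "x\<noteq>y"
    then have "x \<in> V" "y \<in> V" unfolding K_def by blast+
    moreover have "(x,y) \<in> phylogeny_edges W A"
      using xy \<open>x \<in> V\<close> \<open>y \<in> V\<close> aW(4) unfolding K_def phylogeny_edges_def by blast
    ultimately show "(x,y) \<in> E" using ed by blast
  qed
  have wit: "\<exists>w. w\<in>W \<and> u\<in>K w \<and> v\<in>K w" if "(u,v)\<in>F" for u v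
  proof -
    have uvV: "u \<in> V" "v \<in> V" using that FS SV by blast+
    have "(u,v) \<in> phylogeny_edges W A" using that FE ed uvV by blast
    then have "(u,v) \<in> A \<or> (v,u) \<in> A \<or> (\<exists>w. (u, w) \<in> A \<and> (v, w) \<in> A)"
      unfolding phylogeny_edges_def by auto
    then show ?thesis
    proof (elim disjE exE conjE)
      assume "(u,v) \<in> A" then show ?thesis using uvV aW(4) unfolding K_def by (intro exI[of _ v]) auto
    next
      assume "(v,u) \<in> A" then show ?thesis using uvV aW(4) unfolding K_def by (intro exI[of _ u]) auto
    next
      fix w assume "(u,w) \<in> A" "(v,w) \<in> A"
      then show ?thesis using uvV aW(2) unfolding K_def by (intro exI[of _ w]) auto
    qed
  qed
  define wt where "wt f = (SOME w. w\<in>W \<and> fst f \<in> K w \<and> snd f \<in> K w)" for f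
  have wt: "wt f \<in> W \<and> fst f \<in> K (wt f) \<and> snd f \<in> K (wt f)" if "f\<in>F" for f
  proof -
    obtain u v where f: "f = (u,v)" by fastforce
    have "\<exists>w. w\<in>W \<and> u\<in>K w \<and> v\<in>K w" using wit[of u v] that f by auto
    from someI_ex[OF this] show ?thesis unfolding wt_def f by simp
  qed
  have Ksub: "K w \<subseteq> V" for w unfolding K_def by blast
  have Kwt: "K (wt f) = {fst f, snd f}" if "f\<in>F" for f
  proof -
    have f: "f = (fst f, snd f)" by simp
    have "(fst f, snd f) \<in> F" using that by simp
    from cl[OF Ksub Kcl this] wt[OF that] show ?thesis by blast
  qed
  have injw: "inj_on wt F"
  proof (rule inj_onI)
    fix f g assume "f \<in> F" "g \<in> F" "wt f = wt g"
    then have "{fst f, snd f} = {fst g, snd g}" using Kwt by metis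
    then show "f = g" using inj[of "fst f" "snd f" "fst g" "snd g"] \<open>f \<in> F\<close> \<open>g \<in> F\<close> by auto
  qed
  have img: "wt ` F \<subseteq> (S - {m}) \<union> (W - V)"
  proof
    fix x assume "x \<in> wt ` F"
    then obtain f where f: "f \<in> F" "x = wt f" by blast
    obtain u v where uv: "f = (u,v)" by fastforce
    have fs: "u \<in> S" "v \<in> S" "u \<noteq> v" using FS f uv by auto
    have xW: "x \<in> W" using wt f by auto
    show "x \<in> (S - {m}) \<union> (W - V)"
    proof (cases "x \<in> V")
      case False then show ?thesis using xW by auto
    next
      case True
      then have "x \<in> K x" unfolding K_def by auto
      then have xuv: "x = u \<or> x = v" using Kwt[OF f(1)] f uv by auto
      have "x \<noteq> m"
      proof
        assume xm: "x = m"
        have "u \<in> K x" "v \<in> K x" using Kwt[OF f(1)] f uv by auto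
        then have "(u,x) \<in> A \<or> (v,x) \<in> A" using xuv fs unfolding K_def by blast
        then show False using mmin xm fs by auto
      qed
      then show ?thesis using xuv fs by auto
    qed
  qed
  have fS: "finite S" using finite_subset[OF subset_trans[OF SV aW(4)] aW(1)] .
  have "card F = card (wt ` F)" using injw by (simp add: card_image)
  also have "\<dots> \<le> card ((S - {m}) \<union> (W - V))" using img fS aW(1) by (intro card_mono) auto
  also have "\<dots> \<le> card (S - {m}) + card (W - V)" by (rule card_Un_le)
  also have "card (S - {m}) = card S - 1" using mS fS by simp
  finally have "card F \<le> card S - 1 + card (W - V)" .
  moreover have "card S > 0" using fS Sne by (simp add: card_gt_0_iff)
  ultimately show ?thesis by linarith
qed

definition AP :: "nat \<Rightarrow> (nat \<times> nat) set" where
  "AP b = {(u,w). (u = 2 \<and> w \<le> 1) \<or> (u = 0 \<and> 3 \<le> w \<and> w < 2+b) \<or>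
     (w = 1+3*b \<and> (u = 0 \<or> (Xv b u \<and> u \<noteq> 1+3*b))) \<or> (3+3*b \<le> w \<and> w < 2+4*b \<and> (u = 1 \<or> u + 3*b = w))}"
definition WP :: "nat \<Rightarrow> nat set" where "WP b = {0..<2+3*b} \<union> {3+3*b..<2+4*b}"

definition PR :: "nat \<Rightarrow> nat \<Rightarrow> nat \<Rightarrow> bool" where
  "PR b u v \<longleftrightarrow> (u,v) \<in> AP b \<or> (v,u) \<in> AP b \<or> (\<exists>w. (u, w) \<in> AP b \<and> (v, w) \<in> AP b)"

lemma PR_sym: "PR b u v \<Longrightarrow> PR b v u" unfolding PR_def by blast

lemma adj_PR:
  assumes b: "b \<ge> 1" and a: "adjG b u v" shows "PR b u v"
proof -
  have m1: "PR b u v" if "u \<le> 1" "Yv b v" for u v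
  proof (cases "v = 2")
    case True then show ?thesis using that unfolding PR_def AP_def by auto
  next
    case False
    then have v3: "v \<ge> 3" "v < 2+b" using that unfolding Yv_def by auto
    show ?thesis
    proof (cases "u = 0")
      case True then show ?thesis using v3 unfolding PR_def AP_def by auto
    next
      case False
      then have "u = 1" using that by auto
      then have "(u, v+3*b) \<in> AP b" "(v, v+3*b) \<in> AP b" using v3 unfolding AP_def by auto
      then show ?thesis unfolding PR_def by blast
    qed
  qed
  have m2: "PR b u v" if "u = 0 \<or> Xv b u" "Xv b v" "u \<noteq> v" for u v
  proof (cases "v = 1+3*b")
    case True then show ?thesis using that unfolding PR_def AP_def Xv_def by auto
  next
    case False
    show ?thesis
    proof (cases "u = 1+3*b")
      case True then show ?thesis using that unfolding PR_def AP_def Xv_def by auto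
    next
      case uF: False
      have "(u, 1+3*b) \<in> AP b" "(v, 1+3*b) \<in> AP b" using that False uF unfolding AP_def by auto
      then show ?thesis unfolding PR_def by blast
    qed
  qed
  have main: "PR b u v" if a: "(u \<le> 1 \<and> Yv b v) \<or> (u = 0 \<and> Xv b v) \<or> (Xv b u \<and> Xv b v \<and> u \<noteq> v)" for u v
  proof -
    have "u = 0 \<and> Xv b v \<Longrightarrow> u \<noteq> v" unfolding Xv_def by auto
    then show ?thesis using a m1 m2 by blast
  qed
  from a consider "(u \<le> 1 \<and> Yv b v) \<or> (u = 0 \<and> Xv b v) \<or> (Xv b u \<and> Xv b v \<and> u \<noteq> v)"
     | "(v \<le> 1 \<and> Yv b u) \<or> (v = 0 \<and> Xv b u) \<or> (Xv b v \<and> Xv b u \<and> v \<noteq> u)"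
    unfolding adjG_def by blast
  then show ?thesis using main PR_sym by metis
qed

lemma PR_adj:
  assumes b: "b \<ge> 1" and uv: "u \<in> VG b" "v \<in> VG b" "u \<noteq> v" and p: "PR b u v" shows "adjG b u v"
proof -
  have arc: "adjG b u v" if "(u,v) \<in> AP b" "u \<in> VG b" "v \<in> VG b" "u \<noteq> v" for u v
    using that b unfolding AP_def adjG_def Yv_def Xv_def VG_def by auto
  have asym: "adjG b u v \<Longrightarrow> adjG b v u" for u v unfolding adjG_def by auto
  show ?thesis
  proof -
    consider "(u,v) \<in> AP b" | "(v,u) \<in> AP b" | w where "(u, w) \<in> AP b" "(v, w) \<in> AP b"
      using p unfolding PR_def by blast
    then show ?thesis
    proof cases
      case 1 then show ?thesis using arc uv by blast
    next
      case 2 then show ?thesis using arc uv asym by metis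
    next
      case 3
      have uw: "(u = 2 \<and> w \<le> 1) \<or> (u = 0 \<and> 3 \<le> w \<and> w < 2+b) \<or>
        (w = 1+3*b \<and> (u = 0 \<or> (Xv b u \<and> u \<noteq> 1+3*b))) \<or> (3+3*b \<le> w \<and> w < 2+4*b \<and> (u = 1 \<or> u + 3*b = w))"
        using 3 unfolding AP_def by auto
      have vw: "(v = 2 \<and> w \<le> 1) \<or> (v = 0 \<and> 3 \<le> w \<and> w < 2+b) \<or>
        (w = 1+3*b \<and> (v = 0 \<or> (Xv b v \<and> v \<noteq> 1+3*b))) \<or> (3+3*b \<le> w \<and> w < 2+4*b \<and> (v = 1 \<or> v + 3*b = w))"
        using 3 unfolding AP_def by auto
      consider (r1) "w \<le> 1" | (r2) "3 \<le> w" "w < 2+b" | (r3) "w = 1+3*b" | (r4) "3+3*b \<le> w" "w < 2+4*b"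
        using uw by linarith
      then show ?thesis
      proof cases
        case r1 then have "u = 2" "v = 2" using uw vw b by linarith+
        then show ?thesis using uv by simp
      next
        case r2 then have "u = 0" "v = 0" using uw vw b by linarith+
        then show ?thesis using uv by simp
      next
        case r3 then have "u = 0 \<or> Xv b u" "v = 0 \<or> Xv b v" using uw vw b by (auto simp: Xv_def)
        then show ?thesis using uv unfolding adjG_def by auto
      next
        case r4 then have "u = 1 \<or> u + 3*b = w" "v = 1 \<or> v + 3*b = w" using uw vw b by linarith+
        then show ?thesis using uv r4 unfolding adjG_def Yv_def by auto
      qed
    qed
  qed
qed

lemma AP_pd: "b \<ge> 1 \<Longrightarrow> phylogeny_digraph (VG b) (EG b) (WP b) (AP b)"
  unfolding phylogeny_digraph_def
proof (intro conjI ballI)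
  assume b: "b \<ge> 1"
  show "acyclic_digraph (WP b) (AP b)" unfolding acyclic_digraph_def
  proof (intro conjI)
    show "finite (WP b)" unfolding WP_def by auto
    show "AP b \<subseteq> WP b \<times> WP b" using b unfolding AP_def WP_def Xv_def by auto
    show "acyclic (AP b)"
      by (rule acyclic_rank[where f="\<lambda>u. if u = 2 then 0 else u+1"]) (use b in \<open>auto simp: AP_def Xv_def\<close>)
  qed
  show "VG b \<subseteq> WP b" unfolding VG_def WP_def by auto
  fix u v assume uv: "u \<in> VG b" "v \<in> VG b"
  show "((u, v) \<in> EG b) = ((u, v) \<in> phylogeny_edges (WP b) (AP b))"
  proof
    assume "(u,v) \<in> EG b"
    then have a: "adjG b u v" unfolding EG_def by auto
    then have "u \<noteq> v" unfolding adjG_def Yv_def Xv_def by auto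
    then show "(u, v) \<in> phylogeny_edges (WP b) (AP b)"
      using adj_PR[OF b a] uv unfolding PR_def phylogeny_edges_def VG_def WP_def by auto
  next
    assume "(u, v) \<in> phylogeny_edges (WP b) (AP b)"
    then have "u \<noteq> v" "PR b u v" unfolding PR_def phylogeny_edges_def by auto
    then show "(u,v) \<in> EG b" using PR_adj[OF b uv] unfolding EG_def by auto
  qed
next
  fix x y assume "x \<in> WP b - VG b" "y \<in> VG b"
  then show "(x,y) \<notin> AP b" unfolding WP_def VG_def AP_def Xv_def by auto
qed

lemma no_common: "adjG b c u \<Longrightarrow> adjG b c v \<Longrightarrow> u \<le> 1 \<Longrightarrow> Yv b v \<Longrightarrow> False"
  unfolding adjG_def Yv_def Xv_def by auto

lemma p_val: assumes b: "b \<ge> 1" shows "phylogeny_number (VG b) (EG b) = b - 1"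
  unfolding phylogeny_number_def
proof (rule Least_equality)
  have "WP b - VG b = {3+3*b..<2+4*b}" unfolding WP_def VG_def by auto
  then have "card (WP b - VG b) = b - 1" by simp
  then show "\<exists>W A. phylogeny_digraph (VG b) (EG b) W A \<and> card (W - VG b) = b - 1"
    using AP_pd[OF b] by blast
next
  fix n assume "\<exists>W A. phylogeny_digraph (VG b) (EG b) W A \<and> card (W - VG b) = n"
  then obtain W A where pd: "phylogeny_digraph (VG b) (EG b) W A" and n: "card (W - VG b) = n" by blast
  define F where "F = ({0,1} \<times> {2..<2+b} :: (nat \<times> nat) set)"
  have cF: "card F = 2*b" unfolding F_def by (simp add: card_cartesian_product)
  have "card F + 1 \<le> card {0..<2+b} + card (W - VG b)"
  proof (rule p_lower[OF pd])
    show "F \<subseteq> EG b" unfolding F_def EG_def adjG_def Yv_def by auto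
    show "finite F" unfolding F_def by auto
    show "\<forall>(u, v)\<in>F. u \<in> {0..<2 + b} \<and> v \<in> {0..<2 + b} \<and> u \<noteq> v" unfolding F_def by auto
    show "{0..<2 + b} \<subseteq> VG b" unfolding VG_def by auto
    show "{0..<2 + b} \<noteq> {}" by auto
  next
    fix K u v assume K: "K \<subseteq> VG b" "\<forall>x\<in>K. \<forall>y\<in>K. x \<noteq> y \<longrightarrow> (x, y) \<in> EG b"
      "(u, v) \<in> F" "u \<in> K" "v \<in> K"
    have uv: "u \<le> 1" "Yv b v" using K(3) unfolding F_def Yv_def by auto
    show "K = {u, v}"
    proof
      show "{u,v} \<subseteq> K" using K by auto
      show "K \<subseteq> {u,v}"
      proof
        fix c assume "c \<in> K"
        show "c \<in> {u,v}"
        proof (rule ccontr)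
          assume "c \<notin> {u,v}"
          then have "(c,u) \<in> EG b" "(c,v) \<in> EG b" using K \<open>c \<in> K\<close> by auto
          then show False using no_common uv unfolding EG_def by auto
        qed
      qed
    qed
  next
    fix u v u' v' assume "(u, v) \<in> F" "(u', v') \<in> F" "{u, v} = {u', v'}"
    then show "(u, v) = (u', v')" unfolding F_def by (auto simp: doubleton_eq_iff)
  qed
  then show "b - 1 \<le> n" using cF n by simp
qed

theorem mainTheorem11:
  fixes l :: nat
  shows "\<exists>(V :: nat set) E. simple_graph V E \<and> connected_graph V E \<and>
           int (phylogeny_number V E) - int (competition_number V E) + 1 = int l"
proof -
  have b: "l + 1 \<ge> 1" by simp
  show ?thesis
    using simple_G[of "l+1"] conn_G[OF b] p_val[OF b] k_val[OF b] by (intro exI) auto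
qed

end
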